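(* Let $M$ be a nonuniform matroid on a finite set $S$. Then $M$ is irreducible with respect to free product if and only if the lattice $\mathcal D(M)$ contains no nontrivial pinchpoint.
   Context: For a matroid $M$ on $S$ write $\rho_M$ for its rank function, $\rho(M)=\rho_M(S)$, $\nu_M(A)=|A|-\rho_M(A)$, $\lambda_M(A)=\rho(M)-\rho_M(A)$. For matroids $M$ on $S$ and $N$ on $T$ with $S\cap T=\emptyset$, the free product $M\mathbin{\Box} N$ is the matroid on $S\cup T$ whose independent sets are those $A$ with $A\cap S$ independent in $M$ and $\lambda_M(A\cap S)\geq\nu_N(A\cap T)$; it is associative. A nonempty matroid $M$ is irreducible if every factorization of $M$ as a free product of matroids contains $M$ itself as a factor. A cyclic flat is a flat that is a union of circuits. $\mathcal D(M)$ is the complete sublattice of the Boolean algebra $2^S$ generated by all cyclic flats of $M$ (closed under arbitrary unions and intersections, so it contains $\emptyset$ as the empty union and $S$ as the empty intersection). An element $x$ of a poset $P$ is a pinchpoint if every element of $P$ is comparable to $x$; it is nontrivial if it is neither minimal nor maximal in $P$. *)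

theory Defs
  imports Main
begin

type_synonym 'a matroid = "'a set \<times> 'a set set"

definition gnd :: "'a matroid \<Rightarrow> 'a set" where "gnd M = fst M"
definition indep :: "'a matroid \<Rightarrow> 'a set set" where "indep M = snd M"

definition is_matroid :: "'a matroid \<Rightarrow> bool" where
  "is_matroid M \<longleftrightarrow> finite (gnd M) \<and> {} \<in> indep M
     \<and> (\<forall>A \<in> indep M. A \<subseteq> gnd M)
     \<and> (\<forall>A B. A \<in> indep M \<and> B \<subseteq> A \<longrightarrow> B \<in> indep M)
     \<and> (\<forall>A B. A \<in> indep M \<and> B \<in> indep M \<and> card A < card B
           \<longrightarrow> (\<exists>x \<in> B - A. insert x A \<in> indep M))"

definition rank :: "'a matroid \<Rightarrow> 'a set \<Rightarrow> nat" where
  "rank M A = Max (card ` {B. B \<subseteq> A \<and> B \<in> indep M})"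

definition nullity :: "'a matroid \<Rightarrow> 'a set \<Rightarrow> nat" where
  "nullity M A = card A - rank M A"

definition corank :: "'a matroid \<Rightarrow> 'a set \<Rightarrow> nat" where
  "corank M A = rank M (gnd M) - rank M A"

definition free_product :: "'a matroid \<Rightarrow> 'a matroid \<Rightarrow> 'a matroid" where
  "free_product M N = (gnd M \<union> gnd N,
     {A. A \<subseteq> gnd M \<union> gnd N \<and> A \<inter> gnd M \<in> indep M
         \<and> corank M (A \<inter> gnd M) \<ge> nullity N (A \<inter> gnd N)})"

definition empty_matroid :: "'a matroid" where
  "empty_matroid = ({}, {{}})"

text \<open>Free product of a list of factors (well-defined up to bracketing by associativity)\<close>
definition free_product_list :: "'a matroid list \<Rightarrow> 'a matroid" where
  "free_product_list Ns = foldr free_product Ns empty_matroid"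

definition irreducible_matroid :: "'a matroid \<Rightarrow> bool" where
  "irreducible_matroid M \<longleftrightarrow> gnd M \<noteq> {} \<and>
     (\<forall>Ns. (\<forall>N \<in> set Ns. is_matroid N)
        \<and> (\<forall>i < length Ns. \<forall>j < length Ns. i \<noteq> j \<longrightarrow> gnd (Ns ! i) \<inter> gnd (Ns ! j) = {})
        \<and> free_product_list Ns = M
        \<longrightarrow> M \<in> set Ns)"

definition uniform_matroid :: "'a matroid \<Rightarrow> bool" where
  "uniform_matroid M \<longleftrightarrow> (\<exists>r::nat. indep M = {A. A \<subseteq> gnd M \<and> card A \<le> r})"

definition circuit :: "'a matroid \<Rightarrow> 'a set \<Rightarrow> bool" where
  "circuit M C \<longleftrightarrow> C \<subseteq> gnd M \<and> C \<notin> indep M \<and> (\<forall>D \<subset> C. D \<in> indep M)"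

definition flat :: "'a matroid \<Rightarrow> 'a set \<Rightarrow> bool" where
  "flat M F \<longleftrightarrow> F \<subseteq> gnd M \<and> (\<forall>x \<in> gnd M - F. rank M (insert x F) > rank M F)"

definition cyclic_flat :: "'a matroid \<Rightarrow> 'a set \<Rightarrow> bool" where
  "cyclic_flat M F \<longleftrightarrow> flat M F \<and> F = \<Union>{C. circuit M C \<and> C \<subseteq> F}"

text \<open>D(M): complete sublattice of 2^S generated by the cyclic flats
  (closed under arbitrary unions and intersections; the empty intersection is S)\<close>
definition cf_lattice :: "'a matroid \<Rightarrow> 'a set set" where
  "cf_lattice M = \<Inter>{L. L \<subseteq> Pow (gnd M) \<and> {F. cyclic_flat M F} \<subseteq> L
      \<and> (\<forall>X \<subseteq> L. \<Union>X \<in> L) \<and> (\<forall>X \<subseteq> L. gnd M \<inter> \<Inter>X \<in> L)}"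

definition pinchpoint :: "'a set set \<Rightarrow> 'a set \<Rightarrow> bool" where
  "pinchpoint P x \<longleftrightarrow> x \<in> P \<and> (\<forall>y \<in> P. y \<subseteq> x \<or> x \<subseteq> y)"

definition nontrivial_elem :: "'a set set \<Rightarrow> 'a set \<Rightarrow> bool" where
  "nontrivial_elem P x \<longleftrightarrow> x \<in> P \<and> (\<exists>y \<in> P. y \<subset> x) \<and> (\<exists>y \<in> P. x \<subset> y)"

end

theory Submission imports Defs begin

locale mat =
  fixes M :: "'a matroid"
  assumes wf: "is_matroid M"
begin

lemma fin: "finite (gnd M)" using wf by (simp add: is_matroid_def)
lemma emp: "{} \<in> indep M" using wf by (simp add: is_matroid_def)
lemma sub: "A \<in> indep M \<Longrightarrow> A \<subseteq> gnd M" using wf by (simp add: is_matroid_def)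
lemma down: "A \<in> indep M \<Longrightarrow> B \<subseteq> A \<Longrightarrow> B \<in> indep M" using wf by (simp add: is_matroid_def)
lemma aug: "A \<in> indep M \<Longrightarrow> B \<in> indep M \<Longrightarrow> card A < card B \<Longrightarrow> \<exists>x \<in> B - A. insert x A \<in> indep M"
  using wf unfolding is_matroid_def by blast
lemma indep_fin: "A \<in> indep M \<Longrightarrow> finite A" using sub fin finite_subset by blast

lemma fam_fin: "finite {B. B \<subseteq> A \<and> B \<in> indep M}"
proof -
  have "{B. B \<subseteq> A \<and> B \<in> indep M} \<subseteq> Pow (gnd M)" using sub by blast
  then show ?thesis using fin by (meson finite_Pow_iff finite_subset)
qed

lemma rank_ge: "B \<subseteq> A \<Longrightarrow> B \<in> indep M \<Longrightarrow> card B \<le> rank M A"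
  unfolding rank_def using fam_fin by (intro Max_ge) auto

lemma rank_ex: "\<exists>B. B \<subseteq> A \<and> B \<in> indep M \<and> card B = rank M A"
proof -
  have "rank M A \<in> card ` {B. B \<subseteq> A \<and> B \<in> indep M}"
    unfolding rank_def using fam_fin emp by (intro Max_in) auto
  then show ?thesis by auto
qed

lemma rank_mono: "A \<subseteq> A' \<Longrightarrow> rank M A \<le> rank M A'"
  using rank_ex[of A] rank_ge[of _ A'] by force

lemma rank_le_card: "finite A \<Longrightarrow> rank M A \<le> card A"
  using rank_ex[of A] by (metis card_mono)

lemma indep_rank: "I \<in> indep M \<Longrightarrow> rank M I = card I"
  using rank_ge[of I I] rank_le_card[OF indep_fin] by (simp add: le_antisym)

lemma rank_indep: "finite A \<Longrightarrow> card A \<le> rank M A \<Longrightarrow> A \<in> indep M"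
  using rank_ex[of A] by (metis card_seteq)

lemma rank_gnd: "rank M A \<le> rank M (gnd M)"
  using rank_ex[of A] rank_ge[of _ "gnd M"] sub by force

lemma rank_insert: "rank M (insert x A) \<le> Suc (rank M A)"
proof -
  obtain B where B: "B \<subseteq> insert x A" "B \<in> indep M" "card B = rank M (insert x A)"
    using rank_ex by blast
  have "B - {x} \<subseteq> A" "B - {x} \<in> indep M" using B down by auto
  then have "card (B - {x}) \<le> rank M A" using rank_ge by blast
  moreover have "card B \<le> Suc (card (B - {x}))" using indep_fin[OF B(2)]
    by (metis card_Diff1_le card_Suc_Diff1 eq_refl Diff_empty Diff_insert0 le_SucI)
  ultimately show ?thesis using B by simp
qed

lemma extend: assumes "I \<subseteq> A" "I \<in> indep M"
  shows "\<exists>J. I \<subseteq> J \<and> J \<subseteq> A \<and> J \<in> indep M \<and> card J = rank M A"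
proof -
  let ?F = "{J. I \<subseteq> J \<and> J \<subseteq> A \<and> J \<in> indep M}"
  have ff: "finite (card ` ?F)"
    by (rule finite_imageI, rule finite_subset[OF _ fam_fin[of A]]) auto
  have ne: "I \<in> ?F" using assms by auto
  define m where "m = Max (card ` ?F)"
  have "m \<in> card ` ?F" unfolding m_def using ff ne by (intro Max_in) auto
  then obtain J where J: "I \<subseteq> J" "J \<subseteq> A" "J \<in> indep M" "card J = m" by auto
  have mx: "\<And>K. K \<in> ?F \<Longrightarrow> card K \<le> m" unfolding m_def using ff by auto
  have "card J \<le> rank M A" using rank_ge J by blast
  moreover have "\<not> card J < rank M A"
  proof
    assume "card J < rank M A"
    obtain B where B: "B \<subseteq> A" "B \<in> indep M" "card B = rank M A" using rank_ex by blast
    obtain x where x: "x \<in> B - J" "insert x J \<in> indep M" using aug[OF J(3) B(2)] B \<open>card J < rank M A\<close> by auto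
    have "insert x J \<in> ?F" using x J B by auto
    then have "card (insert x J) \<le> m" by (rule mx)
    moreover have "card (insert x J) = Suc (card J)" using x indep_fin[OF J(3)] by simp
    ultimately show False using J by simp
  qed
  ultimately show ?thesis using J by auto
qed

lemma submod: "rank M (A \<union> B) + rank M (A \<inter> B) \<le> rank M A + rank M B"
proof -
  obtain I where I: "I \<subseteq> A \<inter> B" "I \<in> indep M" "card I = rank M (A \<inter> B)" using rank_ex by blast
  obtain J where J: "I \<subseteq> J" "J \<subseteq> A \<union> B" "J \<in> indep M" "card J = rank M (A \<union> B)"
    using extend[of I "A \<union> B"] I by auto
  have fJ: "finite J" using indep_fin J by blast
  have a: "card (J \<inter> A) \<le> rank M A" by (rule rank_ge) (auto intro: down[OF J(3)])
  have b: "card (J \<inter> B) \<le> rank M B" by (rule rank_ge) (auto intro: down[OF J(3)])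
  have e: "(J \<inter> A) \<union> (J \<inter> B) = J" using J by auto
  have "card (J \<inter> A) + card (J \<inter> B) = card ((J \<inter> A) \<union> (J \<inter> B)) + card ((J \<inter> A) \<inter> (J \<inter> B))"
    using fJ by (intro card_Un_Int) auto
  then have c: "card (J \<inter> A) + card (J \<inter> B) = card J + card ((J \<inter> A) \<inter> (J \<inter> B))" unfolding e .
  have "card I \<le> card ((J \<inter> A) \<inter> (J \<inter> B))" using I J fJ by (intro card_mono) auto
  then show ?thesis using a b I J c by linarith
qed

lemma cl_mono: assumes "rank M (insert x C) = rank M C" "C \<subseteq> W"
  shows "rank M (insert x W) = rank M W"
proof -
  have e: "insert x C \<union> W = insert x W" using assms by auto
  have "rank M (insert x W) + rank M (insert x C \<inter> W) \<le> rank M (insert x C) + rank M W"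
    using submod[of "insert x C" W] unfolding e .
  moreover have "rank M C \<le> rank M (insert x C \<inter> W)" using assms by (intro rank_mono) auto
  moreover have "rank M W \<le> rank M (insert x W)" by (intro rank_mono) auto
  ultimately show ?thesis using assms by linarith
qed

lemma cl_union: "finite W \<Longrightarrow> (\<forall>w\<in>W. rank M (insert w Y) = rank M Y) \<Longrightarrow> rank M (W \<union> Y) = rank M Y"
proof (induction W rule: finite_induct)
  case empty then show ?case by simp
next
  case (insert w W)
  have h1: "rank M (insert w Y) = rank M Y" using insert.prems by blast
  have h2: "rank M (W \<union> Y) = rank M Y" using insert.prems insert.IH by blast
  have "rank M (insert w (W \<union> Y)) = rank M (W \<union> Y)"
    by (rule cl_mono[OF h1]) blast
  then show ?case using h2 by simp
qed

lemma dep_rank: assumes "finite A" "A \<notin> indep M" shows "rank M A < card A"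
proof (rule ccontr)
  assume "\<not> rank M A < card A"
  then have "card A \<le> rank M A" by simp
  then have "A \<in> indep M" by (rule rank_indep[OF assms(1)])
  then show False using assms(2) by simp
qed

lemma circuit_ex: assumes "A \<subseteq> gnd M" "A \<notin> indep M" shows "\<exists>C \<subseteq> A. circuit M C"
proof -
  let ?D = "{C. C \<subseteq> A \<and> C \<notin> indep M}"
  have "A \<in> ?D" using assms by simp
  then obtain C where C: "C \<in> ?D" and mn0: "\<forall>D. D \<in> ?D \<longrightarrow> card C \<le> card D"
    using ex_has_least_nat[of "\<lambda>C. C \<in> ?D" A card] by blast
  have CA: "C \<subseteq> A" and Cd: "C \<notin> indep M" using C by simp_all
  have fA: "finite A" using assms(1) fin by (rule finite_subset)
  have "\<forall>D \<subset> C. D \<in> indep M"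
  proof (intro allI impI)
    fix D assume DC: "D \<subset> C"
    have fC: "finite C" using CA fA by (rule finite_subset)
    have lt: "card D < card C" using DC fC by (rule psubset_card_mono[rotated])
    show "D \<in> indep M"
    proof (rule ccontr)
      assume "D \<notin> indep M"
      then have "D \<in> ?D" using DC CA by simp
      then have "card C \<le> card D" using mn0 by simp
      then show False using lt by simp
    qed
  qed
  then have "circuit M C" unfolding circuit_def using CA Cd assms(1) by simp
  then show ?thesis using CA by blast
qed

lemma circuit_fin: "circuit M C \<Longrightarrow> finite C"
  unfolding circuit_def using fin finite_subset by blast

lemma circuit_ne: "circuit M C \<Longrightarrow> C \<noteq> {}"
  unfolding circuit_def using emp by blast

lemma circuit_rank: assumes "circuit M C" "y \<in> C" shows "rank M (C - {y}) = rank M C"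
proof -
  have i: "C - {y} \<in> indep M" using assms unfolding circuit_def by blast
  have f: "finite C" using circuit_fin assms by blast
  have "rank M C < card C" using dep_rank f assms unfolding circuit_def by blast
  moreover have "rank M (C - {y}) = card C - 1" using indep_rank[OF i] f assms by simp
  moreover have "rank M (C - {y}) \<le> rank M C" by (rule rank_mono) blast
  ultimately show ?thesis by linarith
qed

lemma cyc_no_coloop: assumes "cyclic_flat M Z" "y \<in> Z" shows "rank M (Z - {y}) = rank M Z"
proof -
  obtain C where C: "circuit M C" "C \<subseteq> Z" "y \<in> C"
    using assms unfolding cyclic_flat_def by blast
  have "rank M (insert y (C - {y})) = rank M (C - {y})"
    using circuit_rank[OF C(1) C(3)] C(3) by (simp add: insert_absorb)
  then have "rank M (insert y (Z - {y})) = rank M (Z - {y})"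
    by (rule cl_mono) (use C in blast)
  then show ?thesis using assms(2) by (simp add: insert_absorb)
qed

lemma cl_cf: assumes "circuit M C"
  shows "cyclic_flat M {x \<in> gnd M. rank M (insert x C) = rank M C}" (is "cyclic_flat M ?K")
proof -
  have CS: "C \<subseteq> gnd M" using assms unfolding circuit_def by blast
  have CK: "C \<subseteq> ?K" using CS by (auto simp: insert_absorb)
  have fK: "finite ?K" using fin by simp
  have rK: "rank M (?K \<union> C) = rank M C" by (rule cl_union[OF fK]) blast
  have KC: "?K \<union> C = ?K" using CK by blast
  have flat: "flat M ?K"
    unfolding flat_def
  proof (intro conjI ballI)
    show "?K \<subseteq> gnd M" by blast
    fix x assume x: "x \<in> gnd M - ?K"
    then have "rank M (insert x C) \<noteq> rank M C" by blast
    moreover have "rank M C \<le> rank M (insert x C)" by (rule rank_mono) blast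
    moreover have "rank M (insert x C) \<le> rank M (insert x ?K)" by (rule rank_mono) (use CK in blast)
    ultimately show "rank M ?K < rank M (insert x ?K)" using rK KC by simp
  qed
  have "?K \<subseteq> \<Union>{D. circuit M D \<and> D \<subseteq> ?K}"
  proof
    fix x assume x: "x \<in> ?K"
    show "x \<in> \<Union>{D. circuit M D \<and> D \<subseteq> ?K}"
    proof (cases "x \<in> C")
      case True then show ?thesis using assms CK by blast
    next
      case False
      obtain c where c: "c \<in> C" using circuit_ne[OF assms] by blast
      let ?I = "C - {c}"
      have fC: "finite C" using circuit_fin[OF assms] .
      have i: "?I \<in> indep M" using assms c unfolding circuit_def by blast
      have rI: "rank M ?I = card C - 1" using indep_rank[OF i] fC c by simp
      have "rank M (insert x ?I) \<le> rank M (insert x C)" by (rule rank_mono) blast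
      also have "\<dots> = rank M C" using x by blast
      also have "\<dots> = rank M ?I" using circuit_rank[OF assms c] by simp
      finally have le: "rank M (insert x ?I) \<le> rank M ?I" .
      have cx: "card (insert x ?I) = Suc (card ?I)" using False fC by simp
      have dep: "insert x ?I \<notin> indep M"
        using indep_rank[of "insert x ?I"] le cx indep_rank[OF i] by linarith
      have xS: "insert x ?I \<subseteq> gnd M" using x CS by blast
      obtain D where D: "D \<subseteq> insert x ?I" "circuit M D" using circuit_ex[OF xS dep] by blast
      have "x \<in> D"
      proof (rule ccontr)
        assume "x \<notin> D"
        then have "D \<subseteq> ?I" using D by blast
        then have "D \<in> indep M" using down[OF i] by blast
        then show False using D unfolding circuit_def by blast
      qed
      moreover have "D \<subseteq> ?K" using D x CK by blast
      ultimately show ?thesis using D by blast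
    qed
  qed
  then have "?K = \<Union>{D. circuit M D \<and> D \<subseteq> ?K}" by blast
  then show ?thesis using flat unfolding cyclic_flat_def by blast
qed

lemma cl_sub: "circuit M C \<Longrightarrow> C \<subseteq> {x \<in> gnd M. rank M (insert x C) = rank M C}"
  unfolding circuit_def by (auto simp: insert_absorb)

lemma cl_rank: "rank M ({x \<in> gnd M. rank M (insert x C) = rank M C} \<union> C) = rank M C"
  by (rule cl_union) (use fin in auto)

lemma uniform_if: assumes "\<forall>Z. cyclic_flat M Z \<longrightarrow> Z = {} \<or> Z = gnd M"
  shows "uniform_matroid M"
proof -
  let ?r = "rank M (gnd M)"
  have "indep M = {A. A \<subseteq> gnd M \<and> card A \<le> ?r}"
  proof (intro set_eqI iffI)
    fix A assume A: "A \<in> indep M"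
    have "card A \<le> ?r" using rank_ge[OF sub[OF A] A] .
    then show "A \<in> {A. A \<subseteq> gnd M \<and> card A \<le> ?r}" using sub[OF A] by simp
  next
    fix A assume "A \<in> {A. A \<subseteq> gnd M \<and> card A \<le> ?r}"
    then have AS: "A \<subseteq> gnd M" and cA: "card A \<le> ?r" by simp_all
    show "A \<in> indep M"
    proof (rule ccontr)
      assume "A \<notin> indep M"
      then obtain C where C: "C \<subseteq> A" "circuit M C" using circuit_ex[OF AS] by blast
      let ?K = "{x \<in> gnd M. rank M (insert x C) = rank M C}"
      have K: "cyclic_flat M ?K" by (rule cl_cf[OF C(2)])
      have CK: "C \<subseteq> ?K" by (rule cl_sub[OF C(2)])
      have "?K \<noteq> {}" using CK circuit_ne[OF C(2)] by blast
      then have Kg: "?K = gnd M" using assms K by blast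
      have "rank M ?K = rank M C" using cl_rank[of C] CK by (simp add: Un_absorb2)
      moreover have "rank M C < card C"
        using dep_rank[OF circuit_fin[OF C(2)]] C(2) unfolding circuit_def by blast
      moreover have "card C \<le> card A" using C(1) AS fin by (meson card_mono finite_subset)
      ultimately show False using cA Kg by simp
    qed
  qed
  then show ?thesis unfolding uniform_matroid_def by blast
qed

lemma cf_sub: "cyclic_flat M Z \<Longrightarrow> Z \<subseteq> gnd M"
  unfolding cyclic_flat_def flat_def by blast

definition "fam = {L. L \<subseteq> Pow (gnd M) \<and> {F. cyclic_flat M F} \<subseteq> L
      \<and> (\<forall>X \<subseteq> L. \<Union>X \<in> L) \<and> (\<forall>X \<subseteq> L. gnd M \<inter> \<Inter>X \<in> L)}"

lemma cfl_eq: "cf_lattice M = \<Inter>fam" unfolding cf_lattice_def fam_def ..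

lemma cfl_least: assumes "L \<subseteq> Pow (gnd M)" "{F. cyclic_flat M F} \<subseteq> L"
    "\<forall>X \<subseteq> L. \<Union>X \<in> L" "\<forall>X \<subseteq> L. gnd M \<inter> \<Inter>X \<in> L"
  shows "cf_lattice M \<subseteq> L"
proof -
  have "L \<in> fam" unfolding fam_def using assms by simp
  then show ?thesis unfolding cfl_eq by (rule Inter_lower)
qed

lemma cfl_Pow: "cf_lattice M \<subseteq> Pow (gnd M)"
proof (rule cfl_least)
  show "{F. cyclic_flat M F} \<subseteq> Pow (gnd M)" using cf_sub by blast
qed auto

lemma cfl_cf: assumes "cyclic_flat M Z" shows "Z \<in> cf_lattice M"
  unfolding cfl_eq
proof (rule InterI)
  fix L assume "L \<in> fam"
  then have "{F. cyclic_flat M F} \<subseteq> L" unfolding fam_def by simp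
  then show "Z \<in> L" using assms by blast
qed

lemma cfl_Union: assumes "X \<subseteq> cf_lattice M" shows "\<Union>X \<in> cf_lattice M"
  unfolding cfl_eq
proof (rule InterI)
  fix L assume L: "L \<in> fam"
  then have "\<Inter>fam \<subseteq> L" by (rule Inter_lower)
  then have "X \<subseteq> L" using assms unfolding cfl_eq by (rule order_trans[rotated])
  moreover have "\<forall>X \<subseteq> L. \<Union>X \<in> L" using L unfolding fam_def by simp
  ultimately show "\<Union>X \<in> L" by simp
qed

lemma cfl_Inter: assumes "X \<subseteq> cf_lattice M" shows "gnd M \<inter> \<Inter>X \<in> cf_lattice M"
  unfolding cfl_eq
proof (rule InterI)
  fix L assume L: "L \<in> fam"
  then have "\<Inter>fam \<subseteq> L" by (rule Inter_lower)
  then have "X \<subseteq> L" using assms unfolding cfl_eq by (rule order_trans[rotated])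
  moreover have "\<forall>X \<subseteq> L. gnd M \<inter> \<Inter>X \<in> L" using L unfolding fam_def by simp
  ultimately show "gnd M \<inter> \<Inter>X \<in> L" by simp
qed

lemma cfl_empty: "{} \<in> cf_lattice M" using cfl_Union[of "{}"] by simp
lemma cfl_gnd: "gnd M \<in> cf_lattice M" using cfl_Inter[of "{}"] by simp

lemma pinch_comp: assumes "pinchpoint (cf_lattice M) X" "nontrivial_elem (cf_lattice M) X"
  shows "X \<noteq> {} \<and> X \<noteq> gnd M \<and> X \<subseteq> gnd M \<and> (\<forall>Z. cyclic_flat M Z \<longrightarrow> Z \<subseteq> X \<or> X \<subseteq> Z)"
proof -
  have Xl: "X \<in> cf_lattice M" using assms(1) unfolding pinchpoint_def by simp
  have XS: "X \<subseteq> gnd M" using Xl cfl_Pow by blast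
  obtain y where y: "y \<in> cf_lattice M" "y \<subset> X" using assms(2) unfolding nontrivial_elem_def by blast
  obtain z where z: "z \<in> cf_lattice M" "X \<subset> z" using assms(2) unfolding nontrivial_elem_def by blast
  have "z \<subseteq> gnd M" using z(1) cfl_Pow by blast
  then have "X \<noteq> gnd M" using z(2) by blast
  moreover have "X \<noteq> {}" using y(2) by blast
  moreover have "\<forall>Z. cyclic_flat M Z \<longrightarrow> Z \<subseteq> X \<or> X \<subseteq> Z"
    using assms(1) cfl_cf unfolding pinchpoint_def by blast
  ultimately show ?thesis using XS by blast
qed

lemma pinch_exists: assumes "S1 \<subseteq> gnd M" "S1 \<noteq> {}" "S1 \<noteq> gnd M"
    "\<forall>Z. cyclic_flat M Z \<longrightarrow> Z \<subseteq> S1 \<or> S1 \<subseteq> Z" "\<not> uniform_matroid M"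
  shows "\<exists>X. pinchpoint (cf_lattice M) X \<and> nontrivial_elem (cf_lattice M) X"
proof -
  define U where "U = \<Union>{Z. cyclic_flat M Z \<and> Z \<subseteq> S1}"
  define V where "V = gnd M \<inter> \<Inter>{Z. cyclic_flat M Z \<and> S1 \<subseteq> Z}"
  have Ul: "U \<in> cf_lattice M" unfolding U_def by (rule cfl_Union) (use cfl_cf in blast)
  have Vl: "V \<in> cf_lattice M" unfolding V_def by (rule cfl_Inter) (use cfl_cf in blast)
  have US: "U \<subseteq> S1" unfolding U_def by blast
  have SV: "S1 \<subseteq> V" unfolding V_def using assms(1) by blast
  have VS: "V \<subseteq> gnd M" unfolding V_def by blast
  define L where "L = {Y. Y \<subseteq> gnd M \<and> (Y \<subseteq> U \<or> V \<subseteq> Y)}"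
  have "cf_lattice M \<subseteq> L"
  proof (rule cfl_least)
    show "L \<subseteq> Pow (gnd M)" unfolding L_def by blast
    show "{F. cyclic_flat M F} \<subseteq> L"
    proof
      fix F assume "F \<in> {F. cyclic_flat M F}"
      then have F: "cyclic_flat M F" by simp
      have "F \<subseteq> U \<or> V \<subseteq> F"
      proof (cases "F \<subseteq> S1")
        case True then show ?thesis unfolding U_def using F by blast
      next
        case False then have "S1 \<subseteq> F" using assms(4) F by blast
        then show ?thesis unfolding V_def using F by blast
      qed
      then show "F \<in> L" unfolding L_def using cf_sub[OF F] by blast
    qed
    show "\<forall>X \<subseteq> L. \<Union>X \<in> L"
    proof (intro allI impI)
      fix X assume X: "X \<subseteq> L"
      show "\<Union>X \<in> L"
      proof (cases "\<exists>Y \<in> X. V \<subseteq> Y")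
        case True then show ?thesis using X unfolding L_def by blast
      next
        case False then have "\<forall>Y\<in>X. Y \<subseteq> U" using X unfolding L_def by blast
        then show ?thesis using X unfolding L_def by blast
      qed
    qed
    show "\<forall>X \<subseteq> L. gnd M \<inter> \<Inter>X \<in> L"
    proof (intro allI impI)
      fix X assume X: "X \<subseteq> L"
      show "gnd M \<inter> \<Inter>X \<in> L"
      proof (cases "\<exists>Y \<in> X. Y \<subseteq> U")
        case True then show ?thesis unfolding L_def by blast
      next
        case False then have "\<forall>Y\<in>X. V \<subseteq> Y" using X unfolding L_def by blast
        then show ?thesis using VS unfolding L_def by blast
      qed
    qed
  qed
  then have cmp: "\<And>y. y \<in> cf_lattice M \<Longrightarrow> y \<subseteq> U \<or> V \<subseteq> y" unfolding L_def by blast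
  have pU: "pinchpoint (cf_lattice M) U"
    unfolding pinchpoint_def using Ul cmp US SV by blast
  have pV: "pinchpoint (cf_lattice M) V"
    unfolding pinchpoint_def using Vl cmp US SV by blast
  show ?thesis
  proof (cases "U = {}")
    case False
    have "nontrivial_elem (cf_lattice M) U"
      unfolding nontrivial_elem_def using Ul cfl_empty cfl_gnd False US assms(1,3) by blast
    then show ?thesis using pU by blast
  next
    case Ue: True
    show ?thesis
    proof (cases "V = gnd M")
      case False
      have "nontrivial_elem (cf_lattice M) V"
        unfolding nontrivial_elem_def using Vl cfl_empty cfl_gnd False SV VS assms(2) by blast
      then show ?thesis using pV by blast
    next
      case True
      have "\<forall>Z. cyclic_flat M Z \<longrightarrow> Z = {} \<or> Z = gnd M"
      proof (intro allI impI)
        fix Z assume Z: "cyclic_flat M Z"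
        show "Z = {} \<or> Z = gnd M"
        proof (cases "Z \<subseteq> S1")
          case True then have "Z \<subseteq> U" unfolding U_def using Z by blast
          then show ?thesis using Ue by blast
        next
          case False then have "S1 \<subseteq> Z" using assms(4) Z by blast
          then have "V \<subseteq> Z" unfolding V_def using Z by blast
          then show ?thesis using \<open>V = gnd M\<close> cf_sub[OF Z] by blast
        qed
      qed
      then show ?thesis using uniform_if assms(5) by blast
    qed
  qed
qed

end

lemma gnd_fp: "gnd (free_product A B) = gnd A \<union> gnd B"
  by (simp add: free_product_def gnd_def)

lemma indep_fp_raw: "indep (free_product A B) = {I. I \<subseteq> gnd A \<union> gnd B \<and> I \<inter> gnd A \<in> indep A
         \<and> corank A (I \<inter> gnd A) \<ge> nullity B (I \<inter> gnd B)}"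
  by (simp add: free_product_def indep_def)

lemma fp_indep: assumes "is_matroid A" "is_matroid B" "gnd A \<inter> gnd B = {}"
  shows "I \<in> indep (free_product A B) \<longleftrightarrow> I \<subseteq> gnd A \<union> gnd B \<and> I \<inter> gnd A \<in> indep A
     \<and> card I \<le> rank A (gnd A) + rank B (I \<inter> gnd B)"
proof -
  interpret a: mat A by (rule mat.intro[OF assms(1)])
  interpret b: mat B by (rule mat.intro[OF assms(2)])
  show ?thesis
  proof (cases "I \<subseteq> gnd A \<union> gnd B \<and> I \<inter> gnd A \<in> indep A")
    case False then show ?thesis unfolding indep_fp_raw by blast
  next
    case True
    then have IS: "I \<subseteq> gnd A \<union> gnd B" and I1: "I \<inter> gnd A \<in> indep A" by simp_all
    have fI: "finite I" using IS a.fin b.fin by (meson finite_UnI finite_subset)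
    have c1: "corank A (I \<inter> gnd A) = rank A (gnd A) - card (I \<inter> gnd A)"
      unfolding corank_def using a.indep_rank[OF I1] by simp
    have l1: "card (I \<inter> gnd A) \<le> rank A (gnd A)" using a.rank_ge[OF _ I1] by blast
    have n2: "nullity B (I \<inter> gnd B) = card (I \<inter> gnd B) - rank B (I \<inter> gnd B)"
      unfolding nullity_def ..
    have l2: "rank B (I \<inter> gnd B) \<le> card (I \<inter> gnd B)" using b.rank_le_card fI by simp
    have cI: "card I = card (I \<inter> gnd A) + card (I \<inter> gnd B)"
    proof -
      have "I = (I \<inter> gnd A) \<union> (I \<inter> gnd B)" using IS by blast
      moreover have "(I \<inter> gnd A) \<inter> (I \<inter> gnd B) = {}" using assms(3) by blast
      ultimately show ?thesis using fI by (metis card_Un_disjoint finite_Int)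
    qed
    have "corank A (I \<inter> gnd A) \<ge> nullity B (I \<inter> gnd B) \<longleftrightarrow> card I \<le> rank A (gnd A) + rank B (I \<inter> gnd B)"
      unfolding c1 n2 cI using l1 l2 by linarith
    then show ?thesis unfolding indep_fp_raw using True by blast
  qed
qed

context mat begin
lemma rank_union_le: "finite W \<Longrightarrow> rank M (W \<union> Y) \<le> rank M Y + card W"
proof (induction W rule: finite_induct)
  case empty then show ?case by simp
next
  case (insert w W)
  have "rank M (insert w (W \<union> Y)) \<le> Suc (rank M (W \<union> Y))" by (rule rank_insert)
  then show ?case using insert by simp
qed
end

lemma fp_matroid: assumes A: "is_matroid A" and B: "is_matroid B" and d: "gnd A \<inter> gnd B = {}"
  shows "is_matroid (free_product A B)"
proof -
  interpret a: mat A by (rule mat.intro[OF A])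
  interpret b: mat B by (rule mat.intro[OF B])
  note fi = fp_indep[OF A B d]
  let ?F = "free_product A B"
  let ?rA = "rank A (gnd A)"
  have g: "gnd ?F = gnd A \<union> gnd B" by (rule gnd_fp)
  have fg: "finite (gnd ?F)" unfolding g using a.fin b.fin by simp
  have e: "{} \<in> indep ?F" unfolding fi using a.emp by simp
  have s: "\<forall>I \<in> indep ?F. I \<subseteq> gnd ?F"
  proof
    fix I assume "I \<in> indep ?F" then show "I \<subseteq> gnd ?F" unfolding g fi by blast
  qed
  have dn: "\<forall>I J. I \<in> indep ?F \<and> J \<subseteq> I \<longrightarrow> J \<in> indep ?F"
  proof (intro allI impI, elim conjE)
    fix I J assume I: "I \<in> indep ?F" and JI: "J \<subseteq> I"
    have IS: "I \<subseteq> gnd A \<union> gnd B" and I1: "I \<inter> gnd A \<in> indep A"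
      and cI: "card I \<le> ?rA + rank B (I \<inter> gnd B)" using I unfolding fi by simp_all
    have fI: "finite I" using IS a.fin b.fin by (meson finite_UnI finite_subset)
    have J1: "J \<inter> gnd A \<in> indep A" by (rule a.down[OF I1]) (use JI in blast)
    have f2: "finite (I \<inter> gnd B - J \<inter> gnd B)" using fI by simp
    have "rank B ((I \<inter> gnd B - J \<inter> gnd B) \<union> (J \<inter> gnd B)) \<le> rank B (J \<inter> gnd B) + card (I \<inter> gnd B - J \<inter> gnd B)"
      by (rule b.rank_union_le[OF f2])
    moreover have "(I \<inter> gnd B - J \<inter> gnd B) \<union> (J \<inter> gnd B) = I \<inter> gnd B" using JI by blast
    ultimately have r2: "rank B (I \<inter> gnd B) \<le> rank B (J \<inter> gnd B) + card (I \<inter> gnd B - J \<inter> gnd B)" by simp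
    have c3: "card (I \<inter> gnd B - J \<inter> gnd B) \<le> card (I - J)" using fI by (intro card_mono) auto
    have fJ: "finite J" using fI JI by (rule finite_subset[rotated])
    have c5: "card (I - J) = card I - card J" using fJ JI by (rule card_Diff_subset)
    have c6: "card J \<le> card I" using fI JI by (simp add: card_mono)
    have c4: "card I = card J + card (I - J)" using c5 c6 by simp
    have cJ: "card J \<le> ?rA + rank B (J \<inter> gnd B)" using cI r2 c3 c4 by linarith
    have JS: "J \<subseteq> gnd A \<union> gnd B" using IS JI by (rule order_trans[rotated])
    show "J \<in> indep ?F" unfolding fi using J1 JS cJ by simp
  qed
  have ag: "\<forall>P Q. P \<in> indep ?F \<and> Q \<in> indep ?F \<and> card P < card Q \<longrightarrow> (\<exists>x \<in> Q - P. insert x P \<in> indep ?F)"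
  proof (intro allI impI, elim conjE)
    fix P Q assume P: "P \<in> indep ?F" and Q: "Q \<in> indep ?F" and lt: "card P < card Q"
    have PS: "P \<subseteq> gnd A \<union> gnd B" and P1: "P \<inter> gnd A \<in> indep A"
      and cP: "card P \<le> ?rA + rank B (P \<inter> gnd B)" using P unfolding fi by simp_all
    have QS: "Q \<subseteq> gnd A \<union> gnd B" and Q1: "Q \<inter> gnd A \<in> indep A"
      and cQ: "card Q \<le> ?rA + rank B (Q \<inter> gnd B)" using Q unfolding fi by simp_all
    have fP: "finite P" using PS a.fin b.fin by (meson finite_UnI finite_subset)
    have fQ: "finite Q" using QS a.fin b.fin by (meson finite_UnI finite_subset)
    have cPs: "card P = card (P \<inter> gnd A) + card (P \<inter> gnd B)"
    proof -
      have "P = (P \<inter> gnd A) \<union> (P \<inter> gnd B)" using PS by blast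
      moreover have "(P \<inter> gnd A) \<inter> (P \<inter> gnd B) = {}" using d by blast
      ultimately show ?thesis using fP by (metis card_Un_disjoint finite_Int)
    qed
    have cQs: "card Q = card (Q \<inter> gnd A) + card (Q \<inter> gnd B)"
    proof -
      have "Q = (Q \<inter> gnd A) \<union> (Q \<inter> gnd B)" using QS by blast
      moreover have "(Q \<inter> gnd A) \<inter> (Q \<inter> gnd B) = {}" using d by blast
      ultimately show ?thesis using fQ by (metis card_Un_disjoint finite_Int)
    qed
    show "\<exists>x \<in> Q - P. insert x P \<in> indep ?F"
    proof (cases "card P < ?rA + rank B (P \<inter> gnd B)")
      case slack: True
      show ?thesis
      proof (cases "Q \<inter> gnd B \<subseteq> P \<inter> gnd B")
        case False
        then obtain x where x: "x \<in> Q" "x \<in> gnd B" "x \<notin> P" by blast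
        have xA: "x \<notin> gnd A" using x d by blast
        have e1: "insert x P \<inter> gnd A = P \<inter> gnd A" using xA by blast
        have e2: "insert x P \<inter> gnd B = insert x (P \<inter> gnd B)" using x by blast
        have "rank B (P \<inter> gnd B) \<le> rank B (insert x (P \<inter> gnd B))" by (rule b.rank_mono) blast
        moreover have "card (insert x P) = Suc (card P)" using x fP by simp
        ultimately have "card (insert x P) \<le> ?rA + rank B (insert x P \<inter> gnd B)"
          using slack e2 by simp
        moreover have "insert x P \<subseteq> gnd A \<union> gnd B" using PS x by blast
        ultimately have "insert x P \<in> indep ?F" unfolding fi using e1 P1 by simp
        then show ?thesis using x by blast
      next
        case True
        have "card (Q \<inter> gnd B) \<le> card (P \<inter> gnd B)" using True fP by (intro card_mono) auto
        then have "card (P \<inter> gnd A) < card (Q \<inter> gnd A)" using cPs cQs lt by linarith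
        then obtain x where x: "x \<in> Q \<inter> gnd A - P \<inter> gnd A" "insert x (P \<inter> gnd A) \<in> indep A"
          using a.aug[OF P1 Q1] by blast
        have xB: "x \<notin> gnd B" using x d by blast
        have xP: "x \<notin> P" using x by blast
        have e1: "insert x P \<inter> gnd A = insert x (P \<inter> gnd A)" using x by blast
        have e2: "insert x P \<inter> gnd B = P \<inter> gnd B" using xB by blast
        have "card (insert x P) = Suc (card P)" using xP fP by simp
        then have "card (insert x P) \<le> ?rA + rank B (insert x P \<inter> gnd B)"
          using slack e2 by simp
        moreover have "insert x P \<subseteq> gnd A \<union> gnd B" using PS x by blast
        ultimately have "insert x P \<in> indep ?F" unfolding fi using e1 x(2) by simp
        then show ?thesis using x by blast
      qed
    next
      case False
      then have tight: "card P = ?rA + rank B (P \<inter> gnd B)" using cP by linarith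
      have "\<exists>x \<in> Q \<inter> gnd B. rank B (insert x (P \<inter> gnd B)) \<noteq> rank B (P \<inter> gnd B)"
      proof (rule ccontr)
        assume "\<not> ?thesis"
        then have all: "\<forall>x \<in> Q \<inter> gnd B. rank B (insert x (P \<inter> gnd B)) = rank B (P \<inter> gnd B)" by blast
        have "rank B ((Q \<inter> gnd B) \<union> (P \<inter> gnd B)) = rank B (P \<inter> gnd B)"
          by (rule b.cl_union) (use fQ all in auto)
        moreover have "rank B (Q \<inter> gnd B) \<le> rank B ((Q \<inter> gnd B) \<union> (P \<inter> gnd B))" by (rule b.rank_mono) blast
        ultimately show False using cQ tight lt by linarith
      qed
      then obtain x where x: "x \<in> Q" "x \<in> gnd B" and rx: "rank B (insert x (P \<inter> gnd B)) \<noteq> rank B (P \<inter> gnd B)" by blast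
      have xP: "x \<notin> P"
      proof
        assume "x \<in> P"
        then have "x \<in> P \<inter> gnd B" using x by simp
        then have "insert x (P \<inter> gnd B) = P \<inter> gnd B" by (rule insert_absorb)
        then show False using rx by simp
      qed
      have xA: "x \<notin> gnd A" using x d by blast
      have e1: "insert x P \<inter> gnd A = P \<inter> gnd A" using xA by blast
      have e2: "insert x P \<inter> gnd B = insert x (P \<inter> gnd B)" using x by blast
      have "rank B (P \<inter> gnd B) \<le> rank B (insert x (P \<inter> gnd B))" by (rule b.rank_mono) blast
      then have "Suc (rank B (P \<inter> gnd B)) \<le> rank B (insert x (P \<inter> gnd B))" using rx by linarith
      moreover have "card (insert x P) = Suc (card P)" using xP fP by simp
      ultimately have "card (insert x P) \<le> ?rA + rank B (insert x P \<inter> gnd B)"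
        using tight e2 by simp
      moreover have "insert x P \<subseteq> gnd A \<union> gnd B" using PS x by blast
      ultimately have "insert x P \<in> indep ?F" unfolding fi using e1 P1 by simp
      then show ?thesis using x xP by blast
    qed
  qed
  show ?thesis unfolding is_matroid_def by (intro conjI fg e s dn ag)
qed


lemma mat_eqI: "gnd P = gnd Q \<Longrightarrow> indep P = indep Q \<Longrightarrow> P = Q"
  by (simp add: gnd_def indep_def prod_eq_iff)

lemma empty_indep: assumes "is_matroid E" "gnd E = {}" shows "indep E = {{}}"
proof -
  interpret e: mat E by (rule mat.intro[OF assms(1)])
  show ?thesis using e.emp e.sub assms(2) by blast
qed

lemma empty_rank: assumes "is_matroid E" "gnd E = {}" shows "rank E X = 0"
proof -
  interpret e: mat E by (rule mat.intro[OF assms(1)])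
  obtain B where "B \<subseteq> X" "B \<in> indep E" "card B = rank E X" using e.rank_ex by blast
  then show ?thesis using empty_indep[OF assms] by auto
qed

lemma fp_empty_left: assumes E: "is_matroid E" "gnd E = {}" and N: "is_matroid N"
  shows "free_product E N = N"
proof (rule mat_eqI)
  interpret n: mat N by (rule mat.intro[OF N])
  show "gnd (free_product E N) = gnd N" unfolding gnd_fp using E by simp
  have d: "gnd E \<inter> gnd N = {}" using E by simp
  show "indep (free_product E N) = indep N"
  proof (intro set_eqI)
    fix I
    show "I \<in> indep (free_product E N) \<longleftrightarrow> I \<in> indep N"
    proof
      assume "I \<in> indep (free_product E N)"
      then have IS: "I \<subseteq> gnd N" and c: "card I \<le> rank E (gnd E) + rank N (I \<inter> gnd N)"
        unfolding fp_indep[OF E(1) N d] using E(2) by simp_all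
      have "I \<inter> gnd N = I" using IS by blast
      then have "card I \<le> rank N I" using c empty_rank[OF E] by simp
      moreover have "finite I" using IS n.fin by (rule finite_subset)
      ultimately show "I \<in> indep N" using n.rank_indep by blast
    next
      assume I: "I \<in> indep N"
      have IS: "I \<subseteq> gnd N" using n.sub[OF I] .
      have "I \<inter> gnd N = I" using IS by blast
      then show "I \<in> indep (free_product E N)"
        unfolding fp_indep[OF E(1) N d] using E IS n.indep_rank[OF I] empty_indep[OF E] by simp
    qed
  qed
qed

lemma fp_empty_right: assumes E: "is_matroid E" "gnd E = {}" and N: "is_matroid N"
  shows "free_product N E = N"
proof (rule mat_eqI)
  interpret n: mat N by (rule mat.intro[OF N])
  show "gnd (free_product N E) = gnd N" unfolding gnd_fp using E by simp
  have d: "gnd N \<inter> gnd E = {}" using E by simp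
  show "indep (free_product N E) = indep N"
  proof (intro set_eqI)
    fix I
    show "I \<in> indep (free_product N E) \<longleftrightarrow> I \<in> indep N"
    proof
      assume "I \<in> indep (free_product N E)"
      then have IS: "I \<subseteq> gnd N" and c: "I \<inter> gnd N \<in> indep N"
        unfolding fp_indep[OF N E(1) d] using E(2) by simp_all
      have "I \<inter> gnd N = I" using IS by blast
      then show "I \<in> indep N" using c by simp
    next
      assume I: "I \<in> indep N"
      have IS: "I \<subseteq> gnd N" using n.sub[OF I] .
      have e1: "I \<inter> gnd N = I" using IS by blast
      have "card I \<le> rank N (gnd N)" using n.rank_ge[OF IS I] .
      then show "I \<in> indep (free_product N E)"
        unfolding fp_indep[OF N E(1) d] using E IS I e1 empty_rank[OF E] by simp
    qed
  qed
qed

lemma fpl_cons: "free_product_list (N # Ns) = free_product N (free_product_list Ns)"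
  unfolding free_product_list_def by simp

lemma fpl_nil: "free_product_list [] = empty_matroid"
  unfolding free_product_list_def by simp

definition disj_list :: "'a matroid list \<Rightarrow> bool" where
  "disj_list Ns \<longleftrightarrow> (\<forall>i < length Ns. \<forall>j < length Ns. i \<noteq> j \<longrightarrow> gnd (Ns ! i) \<inter> gnd (Ns ! j) = {})"

lemma disj_cons: assumes "disj_list (N # Ns)"
  shows "disj_list Ns" "gnd N \<inter> \<Union>(gnd ` set Ns) = {}"
proof -
  show "disj_list Ns" unfolding disj_list_def
  proof (intro allI impI)
    fix i j assume "i < length Ns" "j < length Ns" "i \<noteq> j"
    then have "gnd ((N # Ns) ! Suc i) \<inter> gnd ((N # Ns) ! Suc j) = {}"
      using assms unfolding disj_list_def by (metis Suc_inject length_Cons not_less_eq)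
    then show "gnd (Ns ! i) \<inter> gnd (Ns ! j) = {}" by simp
  qed
  show "gnd N \<inter> \<Union>(gnd ` set Ns) = {}"
  proof (rule ccontr)
    assume "gnd N \<inter> \<Union>(gnd ` set Ns) \<noteq> {}"
    then obtain x K where "x \<in> gnd N" "K \<in> set Ns" "x \<in> gnd K" by blast
    then obtain j where j: "j < length Ns" "Ns ! j = K" by (meson in_set_conv_nth)
    have "gnd ((N # Ns) ! 0) \<inter> gnd ((N # Ns) ! Suc j) = {}"
      using assms j(1) unfolding disj_list_def by (metis Suc_less_eq length_Cons nat.distinct(1) zero_less_Suc)
    then show False using j \<open>x \<in> gnd N\<close> \<open>x \<in> gnd K\<close> by simp blast
  qed
qed

lemma fpl_mat: "(\<forall>N \<in> set Ns. is_matroid N) \<Longrightarrow> disj_list Ns \<Longrightarrow>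
   is_matroid (free_product_list Ns) \<and> gnd (free_product_list Ns) = \<Union>(gnd ` set Ns)"
proof (induction Ns)
  case Nil
  have "is_matroid (empty_matroid :: 'a matroid)"
    unfolding is_matroid_def empty_matroid_def gnd_def indep_def by auto
  then show ?case unfolding fpl_nil by (simp add: empty_matroid_def gnd_def)
next
  case (Cons N Ns)
  have IH: "is_matroid (free_product_list Ns) \<and> gnd (free_product_list Ns) = \<Union>(gnd ` set Ns)"
    using Cons.IH Cons.prems(1) disj_cons(1)[OF Cons.prems(2)] by simp
  have d: "gnd N \<inter> gnd (free_product_list Ns) = {}" using IH disj_cons(2)[OF Cons.prems(2)] by simp
  have "is_matroid (free_product N (free_product_list Ns))"
    using fp_matroid[OF _ _ d] IH Cons.prems(1) by simp
  then show ?case unfolding fpl_cons gnd_fp using IH by simp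
qed

lemma reduce: "(\<forall>N \<in> set Ns. is_matroid N) \<Longrightarrow> disj_list Ns \<Longrightarrow> free_product_list Ns = M \<Longrightarrow>
   M \<notin> set Ns \<Longrightarrow> gnd M \<noteq> {} \<Longrightarrow>
   \<exists>A B. is_matroid A \<and> is_matroid B \<and> gnd A \<inter> gnd B = {} \<and> gnd A \<noteq> {} \<and> gnd B \<noteq> {}
      \<and> M = free_product A B"
proof (induction Ns)
  case Nil
  then show ?case unfolding fpl_nil by (auto simp: empty_matroid_def gnd_def)
next
  case (Cons N Ns)
  let ?R = "free_product_list Ns"
  have mR: "is_matroid ?R" and gR: "gnd ?R = \<Union>(gnd ` set Ns)"
    using fpl_mat[of Ns] Cons.prems(1) disj_cons(1)[OF Cons.prems(2)] by simp_all
  have mN: "is_matroid N" using Cons.prems(1) by simp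
  have d: "gnd N \<inter> gnd ?R = {}" using gR disj_cons(2)[OF Cons.prems(2)] by simp
  have MNR: "M = free_product N ?R" using Cons.prems(3) unfolding fpl_cons by simp
  show ?case
  proof (cases "gnd N = {}")
    case True
    then have "M = ?R" using MNR fp_empty_left[OF mN True mR] by simp
    then show ?thesis using Cons.IH Cons.prems disj_cons(1)[OF Cons.prems(2)] by simp
  next
    case gN: False
    show ?thesis
    proof (cases "gnd ?R = {}")
      case True
      then have "M = N" using MNR fp_empty_right[OF mR True mN] by simp
      then show ?thesis using Cons.prems(4) by simp
    next
      case False
      then show ?thesis using gN mN mR d MNR by blast
    qed
  qed
qed


context mat begin

lemma split_cf: assumes A: "is_matroid A" and B: "is_matroid B" and d: "gnd A \<inter> gnd B = {}"
  and MF: "M = free_product A B" and Z: "cyclic_flat M Z"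
  shows "Z \<subseteq> gnd A \<or> gnd A \<subseteq> Z"
proof (rule ccontr)
  assume "\<not> ?thesis"
  then obtain y x where y: "y \<in> Z" "y \<notin> gnd A" and x: "x \<in> gnd A" "x \<notin> Z" by blast
  interpret b: mat B by (rule mat.intro[OF B])
  have gM: "gnd M = gnd A \<union> gnd B" using MF gnd_fp by simp
  have fi: "\<And>I. I \<in> indep M \<longleftrightarrow> I \<subseteq> gnd A \<union> gnd B \<and> I \<inter> gnd A \<in> indep A
     \<and> card I \<le> rank A (gnd A) + rank B (I \<inter> gnd B)"
    using fp_indep[OF A B d] MF by simp
  have ZS: "Z \<subseteq> gnd M" using cf_sub[OF Z] .
  have yB: "y \<in> gnd B" using y ZS gM by blast
  have xB: "x \<notin> gnd B" using x d by blast
  have xS: "x \<in> gnd M" using x gM by blast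
  have r1: "rank M (Z - {y}) = rank M Z" by (rule cyc_no_coloop[OF Z y(1)])
  have r2: "rank M Z < rank M (insert x Z)"
    using Z xS x(2) unfolding cyclic_flat_def flat_def by blast
  let ?P = "insert x (Z - {y})"
  have "rank M (?P \<union> Z) + rank M (?P \<inter> Z) \<le> rank M ?P + rank M Z" by (rule submod)
  moreover have "?P \<union> Z = insert x Z" using y by blast
  moreover have "?P \<inter> Z = Z - {y}" using x by blast
  ultimately have r3: "rank M (Z - {y}) < rank M ?P" using r1 r2 by simp
  obtain I where I: "I \<subseteq> Z - {y}" "I \<in> indep M" "card I = rank M (Z - {y})" using rank_ex by blast
  obtain J where J: "J \<subseteq> ?P" "J \<in> indep M" "card J = rank M ?P" using rank_ex by blast
  obtain w where w: "w \<in> J - I" "insert w I \<in> indep M" using aug[OF I(2) J(2)] I(3) J(3) r3 by auto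
  have fI: "finite I" using indep_fin[OF I(2)] .
  have wx: "w = x"
  proof (rule ccontr)
    assume "w \<noteq> x"
    then have "insert w I \<subseteq> Z - {y}" using w J(1) I(1) by blast
    then have "card (insert w I) \<le> rank M (Z - {y})" using rank_ge w(2) by blast
    moreover have "card (insert w I) = Suc (card I)" using w fI by simp
    ultimately show False using I(3) by simp
  qed
  have xI: "x \<notin> I" using I(1) x(2) by blast
  have "card (insert x I) \<le> rank A (gnd A) + rank B (insert x I \<inter> gnd B)"
    using fi w(2) wx by blast
  moreover have "insert x I \<inter> gnd B = I \<inter> gnd B" using xB by blast
  moreover have "card (insert x I) = Suc (card I)" using xI fI by simp
  ultimately have c: "Suc (card I) \<le> rank A (gnd A) + rank B (I \<inter> gnd B)" by simp
  have yI: "y \<notin> I" using I(1) by blast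
  have "rank B (I \<inter> gnd B) \<le> rank B (insert y I \<inter> gnd B)" by (rule b.rank_mono) blast
  moreover have "card (insert y I) = Suc (card I)" using yI fI by simp
  ultimately have c2: "card (insert y I) \<le> rank A (gnd A) + rank B (insert y I \<inter> gnd B)" using c by simp
  have e1: "insert y I \<inter> gnd A = I \<inter> gnd A" using y(2) by blast
  have I1: "I \<inter> gnd A \<in> indep A" using fi I(2) by blast
  have yS: "insert y I \<subseteq> gnd A \<union> gnd B" using I(1) ZS gM y(1) by blast
  have iy: "insert y I \<in> indep M" unfolding fi using c2 e1 I1 yS by simp
  have "insert y I \<subseteq> Z" using I(1) y(1) by blast
  then have "card (insert y I) \<le> rank M Z" using rank_ge iy by blast
  then show False using \<open>card (insert y I) = Suc (card I)\<close> I(3) r1 by simp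
qed

end


lemma empty_mat: "is_matroid (empty_matroid :: 'a matroid)" "gnd (empty_matroid :: 'a matroid) = {}"
  unfolding is_matroid_def empty_matroid_def gnd_def indep_def by auto

context mat begin

lemma pinch_factor: assumes XS: "X \<subseteq> gnd M" and Xe: "X \<noteq> {}" and Xg: "X \<noteq> gnd M"
  and comp: "\<forall>Z. cyclic_flat M Z \<longrightarrow> Z \<subseteq> X \<or> X \<subseteq> Z"
  shows "\<not> irreducible_matroid M"
proof -
  obtain B where B: "B \<subseteq> X" "B \<in> indep M" "card B = rank M X" using rank_ex by blast
  define MX where "MX = (X, {I \<in> indep M. I \<subseteq> X})"
  define N where "N = (gnd M - X, {Y. Y \<subseteq> gnd M - X \<and> Y \<union> B \<in> indep M})"
  have gMX: "gnd MX = X" and iMX: "indep MX = {I \<in> indep M. I \<subseteq> X}"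
    unfolding MX_def gnd_def indep_def by simp_all
  have gN: "gnd N = gnd M - X" and iN: "indep N = {Y. Y \<subseteq> gnd M - X \<and> Y \<union> B \<in> indep M}"
    unfolding N_def gnd_def indep_def by simp_all
  have fX: "finite X" using XS fin by (rule finite_subset)
  have fB: "finite B" using indep_fin[OF B(2)] .
  have mMX: "is_matroid MX"
    unfolding is_matroid_def gMX iMX
  proof (intro conjI allI impI ballI)
    show "finite X" by (rule fX)
    show "{} \<in> {I \<in> indep M. I \<subseteq> X}" using emp by simp
    fix I assume "I \<in> {I \<in> indep M. I \<subseteq> X}" then show "I \<subseteq> X" by simp
  next
    fix I J assume "I \<in> {I \<in> indep M. I \<subseteq> X} \<and> J \<subseteq> I"
    then show "J \<in> {I \<in> indep M. I \<subseteq> X}" using down by auto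
  next
    fix I J assume a: "I \<in> {I \<in> indep M. I \<subseteq> X} \<and> J \<in> {I \<in> indep M. I \<subseteq> X} \<and> card I < card J"
    then obtain x where "x \<in> J - I" "insert x I \<in> indep M" using aug by blast
    then show "\<exists>x\<in>J - I. insert x I \<in> {I \<in> indep M. I \<subseteq> X}" using a by blast
  qed
  have mN: "is_matroid N"
    unfolding is_matroid_def gN iN
  proof (intro conjI allI impI ballI)
    show "finite (gnd M - X)" using fin by simp
    show "{} \<in> {Y. Y \<subseteq> gnd M - X \<and> Y \<union> B \<in> indep M}" using B by simp
    fix I assume "I \<in> {Y. Y \<subseteq> gnd M - X \<and> Y \<union> B \<in> indep M}" then show "I \<subseteq> gnd M - X" by simp
  next
    fix I J assume a: "I \<in> {Y. Y \<subseteq> gnd M - X \<and> Y \<union> B \<in> indep M} \<and> J \<subseteq> I"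
    then have "J \<union> B \<in> indep M" using down[of "I \<union> B" "J \<union> B"] by blast
    then show "J \<in> {Y. Y \<subseteq> gnd M - X \<and> Y \<union> B \<in> indep M}" using a by blast
  next
    fix I J assume a: "I \<in> {Y. Y \<subseteq> gnd M - X \<and> Y \<union> B \<in> indep M} \<and> J \<in> {Y. Y \<subseteq> gnd M - X \<and> Y \<union> B \<in> indep M} \<and> card I < card J"
    have I: "I \<subseteq> gnd M - X" "I \<union> B \<in> indep M" and J: "J \<subseteq> gnd M - X" "J \<union> B \<in> indep M"
      and lt: "card I < card J" using a by simp_all
    have fI: "finite I" using I(1) fin finite_subset by blast
    have fJ: "finite J" using J(1) fin finite_subset by blast
    have "card (I \<union> B) = card I + card B" using I(1) B(1) fI fB by (intro card_Un_disjoint) auto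
    moreover have "card (J \<union> B) = card J + card B" using J(1) B(1) fJ fB by (intro card_Un_disjoint) auto
    ultimately have "card (I \<union> B) < card (J \<union> B)" using lt by simp
    then obtain x where x: "x \<in> (J \<union> B) - (I \<union> B)" "insert x (I \<union> B) \<in> indep M"
      using aug[OF I(2) J(2)] by blast
    have "insert x I \<union> B = insert x (I \<union> B)" by simp
    then have "insert x I \<in> {Y. Y \<subseteq> gnd M - X \<and> Y \<union> B \<in> indep M}" using x I J by auto
    then show "\<exists>x\<in>J - I. insert x I \<in> {Y. Y \<subseteq> gnd M - X \<and> Y \<union> B \<in> indep M}" using x by blast
  qed
  interpret n: mat N by (rule mat.intro[OF mN])
  have rMX: "rank MX X = rank M X"
  proof -
    have "{C. C \<subseteq> X \<and> C \<in> indep MX} = {C. C \<subseteq> X \<and> C \<in> indep M}" unfolding iMX by blast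
    then show ?thesis unfolding rank_def by simp
  qed
  have rN: "rank N Y + card B = rank M (Y \<union> B)" if Y: "Y \<subseteq> gnd M - X" for Y
  proof (rule antisym)
    obtain Y' where Y': "Y' \<subseteq> Y" "Y' \<in> indep N" "card Y' = rank N Y" using n.rank_ex by blast
    have Y'i: "Y' \<union> B \<in> indep M" "Y' \<subseteq> gnd M - X" using Y'(2) unfolding iN by simp_all
    have fY': "finite Y'" using Y'i(2) fin finite_subset by blast
    have "card (Y' \<union> B) = card Y' + card B" using Y'i(2) B(1) fY' fB by (intro card_Un_disjoint) auto
    moreover have "card (Y' \<union> B) \<le> rank M (Y \<union> B)" using rank_ge[OF _ Y'i(1)] Y'(1) by blast
    ultimately show "rank N Y + card B \<le> rank M (Y \<union> B)" using Y'(3) by simp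
  next
    obtain J where J: "B \<subseteq> J" "J \<subseteq> Y \<union> B" "J \<in> indep M" "card J = rank M (Y \<union> B)"
      using extend[of B "Y \<union> B"] B(2) by blast
    have e: "(J - B) \<union> B = J" using J(1) by blast
    have "J - B \<subseteq> gnd M - X" using J(2) Y by blast
    then have "J - B \<in> indep N" unfolding iN using e J(3) by simp
    then have "card (J - B) \<le> rank N Y" using n.rank_ge[of "J - B" Y] J(2) by blast
    moreover have "card (J - B) = card J - card B" using J(1) fB by (simp add: card_Diff_subset)
    moreover have "card B \<le> card J" using J(1) indep_fin[OF J(3)] by (simp add: card_mono)
    ultimately show "rank M (Y \<union> B) \<le> rank N Y + card B" using J(4) by simp
  qed
  have d: "gnd MX \<inter> gnd N = {}" unfolding gMX gN by blast
  have rB: "rank M B = rank M X" using indep_rank[OF B(2)] B(3) by simp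
  have clB: "rank M (X \<union> Y) = rank M (Y \<union> B)" for Y
  proof -
    have "\<forall>x\<in>X. rank M (insert x (Y \<union> B)) = rank M (Y \<union> B)"
    proof
      fix x assume x: "x \<in> X"
      have "rank M (insert x B) \<le> rank M X" by (rule rank_mono) (use x B(1) in blast)
      moreover have "rank M B \<le> rank M (insert x B)" by (rule rank_mono) blast
      ultimately have "rank M (insert x B) = rank M B" using rB by simp
      then show "rank M (insert x (Y \<union> B)) = rank M (Y \<union> B)" by (rule cl_mono) blast
    qed
    then have "rank M (X \<union> (Y \<union> B)) = rank M (Y \<union> B)" by (rule cl_union[OF fX])
    moreover have "X \<union> (Y \<union> B) = X \<union> Y" using B(1) by blast
    ultimately show ?thesis by simp
  qed
  have FP: "free_product MX N = M"
  proof (rule mat_eqI)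
    show "gnd (free_product MX N) = gnd M" unfolding gnd_fp gMX gN using XS by blast
    show "indep (free_product MX N) = indep M"
    proof (intro set_eqI)
      fix I
      let ?I2 = "I \<inter> (gnd M - X)"
      have "I \<in> indep (free_product MX N) \<longleftrightarrow> I \<subseteq> gnd M \<and> I \<inter> X \<in> indep M
          \<and> card I \<le> rank M X + rank N ?I2"
      proof -
        have u: "X \<union> (gnd M - X) = gnd M" using XS by blast
        show ?thesis unfolding fp_indep[OF mMX mN d] gMX gN iMX u rMX by simp
      qed
      also have "\<dots> \<longleftrightarrow> I \<subseteq> gnd M \<and> I \<inter> X \<in> indep M \<and> card I \<le> rank M (?I2 \<union> B)"
        using rN[of ?I2] B(3) by auto
      also have "\<dots> \<longleftrightarrow> I \<in> indep M"
      proof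
        assume "I \<subseteq> gnd M \<and> I \<inter> X \<in> indep M \<and> card I \<le> rank M (?I2 \<union> B)"
        then have IS: "I \<subseteq> gnd M" and I1: "I \<inter> X \<in> indep M" and cI: "card I \<le> rank M (?I2 \<union> B)"
          by simp_all
        show "I \<in> indep M"
        proof (rule ccontr)
          assume dep: "I \<notin> indep M"
          obtain C where C: "C \<subseteq> I" "circuit M C" using circuit_ex[OF IS dep] by blast
          let ?K = "{x \<in> gnd M. rank M (insert x C) = rank M C}"
          have K: "cyclic_flat M ?K" by (rule cl_cf[OF C(2)])
          have CK: "C \<subseteq> ?K" by (rule cl_sub[OF C(2)])
          show False
          proof (cases "?K \<subseteq> X")
            case True
            then have "C \<subseteq> I \<inter> X" using CK C(1) by blast
            then have "C \<in> indep M" using down[OF I1] by blast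
            then show False using C(2) unfolding circuit_def by blast
          next
            case False
            then have XK: "X \<subseteq> ?K" using comp K by blast
            have "\<forall>x\<in>X. rank M (insert x (?I2 \<union> C)) = rank M (?I2 \<union> C)"
            proof
              fix x assume "x \<in> X"
              then have "rank M (insert x C) = rank M C" using XK by blast
              then show "rank M (insert x (?I2 \<union> C)) = rank M (?I2 \<union> C)" by (rule cl_mono) blast
            qed
            then have "rank M (X \<union> (?I2 \<union> C)) = rank M (?I2 \<union> C)" by (rule cl_union[OF fX])
            moreover have "rank M (?I2 \<union> B) \<le> rank M (X \<union> (?I2 \<union> C))" by (rule rank_mono) (use B(1) in blast)
            moreover have "rank M (?I2 \<union> C) \<le> rank M I" by (rule rank_mono) (use C(1) in blast)
            moreover have "rank M I < card I" using dep_rank[OF _ dep] IS fin finite_subset by blast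
            ultimately show False using cI by simp
          qed
        qed
      next
        assume I: "I \<in> indep M"
        have IS: "I \<subseteq> gnd M" using sub[OF I] .
        have I1: "I \<inter> X \<in> indep M" using down[OF I] by blast
        have "card I = rank M I" using indep_rank[OF I] by simp
        also have "\<dots> \<le> rank M (X \<union> ?I2)" by (rule rank_mono) (use IS in blast)
        also have "\<dots> = rank M (?I2 \<union> B)" by (rule clB)
        finally show "I \<subseteq> gnd M \<and> I \<inter> X \<in> indep M \<and> card I \<le> rank M (?I2 \<union> B)"
          using IS I1 by simp
      qed
      finally show "I \<in> indep (free_product MX N) \<longleftrightarrow> I \<in> indep M" .
    qed
  qed
  have FL: "free_product_list [MX, N] = M"
    unfolding free_product_list_def using FP fp_empty_right[OF empty_mat mN] by simp
  have ms: "\<forall>K \<in> set [MX, N]. is_matroid K" using mMX mN by simp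
  have dj: "\<forall>i < length [MX, N]. \<forall>j < length [MX, N]. i \<noteq> j \<longrightarrow> gnd ([MX, N] ! i) \<inter> gnd ([MX, N] ! j) = {}"
  proof (intro allI impI)
    fix i j assume "i < length [MX, N]" "j < length [MX, N]" "i \<noteq> j"
    then have "(i = 0 \<and> j = 1) \<or> (i = 1 \<and> j = 0)" by auto
    then show "gnd ([MX, N] ! i) \<inter> gnd ([MX, N] ! j) = {}" using d by auto
  qed
  have "M \<notin> set [MX, N]"
  proof
    assume "M \<in> set [MX, N]"
    then have "M = MX \<or> M = N" by simp
    then show False using gMX gN Xe Xg XS by auto
  qed
  then show ?thesis unfolding irreducible_matroid_def using FL ms dj by blast
qed

end


theorem theorem6p11:
  fixes M :: "'a matroid"
  assumes "is_matroid M"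
    and "\<not> uniform_matroid M"
  shows "irreducible_matroid M \<longleftrightarrow>
         \<not> (\<exists>x. pinchpoint (cf_lattice M) x \<and> nontrivial_elem (cf_lattice M) x)"
proof -
  interpret m: mat M by (rule mat.intro[OF assms(1)])
  show ?thesis
  proof
    assume irr: "irreducible_matroid M"
    show "\<not> (\<exists>x. pinchpoint (cf_lattice M) x \<and> nontrivial_elem (cf_lattice M) x)"
    proof
      assume "\<exists>x. pinchpoint (cf_lattice M) x \<and> nontrivial_elem (cf_lattice M) x"
      then obtain X where "pinchpoint (cf_lattice M) X" "nontrivial_elem (cf_lattice M) X" by blast
      then have "X \<noteq> {} \<and> X \<noteq> gnd M \<and> X \<subseteq> gnd M \<and> (\<forall>Z. cyclic_flat M Z \<longrightarrow> Z \<subseteq> X \<or> X \<subseteq> Z)"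
        by (rule m.pinch_comp)
      then have "\<not> irreducible_matroid M" using m.pinch_factor by blast
      then show False using irr by simp
    qed
  next
    assume np: "\<not> (\<exists>x. pinchpoint (cf_lattice M) x \<and> nontrivial_elem (cf_lattice M) x)"
    have gne: "gnd M \<noteq> {}"
    proof
      assume g: "gnd M = {}"
      have "indep M = {A. A \<subseteq> gnd M \<and> card A \<le> 0}" using empty_indep[OF assms(1) g] g by auto
      then have "uniform_matroid M" unfolding uniform_matroid_def by blast
      then show False using assms(2) by simp
    qed
    show "irreducible_matroid M"
      unfolding irreducible_matroid_def
    proof (intro conjI allI impI gne)
      fix Ns assume h: "(\<forall>N \<in> set Ns. is_matroid N)
        \<and> (\<forall>i < length Ns. \<forall>j < length Ns. i \<noteq> j \<longrightarrow> gnd (Ns ! i) \<inter> gnd (Ns ! j) = {})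
        \<and> free_product_list Ns = M"
      show "M \<in> set Ns"
      proof (rule ccontr)
        assume nM: "M \<notin> set Ns"
        have "disj_list Ns" unfolding disj_list_def using h by blast
        then obtain A B where AB: "is_matroid A" "is_matroid B" "gnd A \<inter> gnd B = {}" "gnd A \<noteq> {}"
            "gnd B \<noteq> {}" "M = free_product A B"
          using reduce[of Ns M] h nM gne by blast
        have gM: "gnd M = gnd A \<union> gnd B" using AB(6) gnd_fp by simp
        have c: "\<forall>Z. cyclic_flat M Z \<longrightarrow> Z \<subseteq> gnd A \<or> gnd A \<subseteq> Z"
          using m.split_cf[OF AB(1) AB(2) AB(3) AB(6)] by blast
        have "gnd A \<subseteq> gnd M" using gM by blast
        moreover have "gnd A \<noteq> gnd M" using gM AB(3) AB(5) by blast
        ultimately have "\<exists>X. pinchpoint (cf_lattice M) X \<and> nontrivial_elem (cf_lattice M) X"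
          using m.pinch_exists[OF _ AB(4) _ c assms(2)] by blast
        then show False using np by simp
      qed
    qed
  qed
qed

end
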